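(* Let $i\in\{1,\dots,d\}$, let $I\subseteq\{1,\dots,d\}$ with $|I|=i$, and let $\omega=(\omega_0,\dots,\omega_d)\in\mathbb{R}^{d+1}_{>0}$. Then, identifying $L_I=\operatorname{span}\{e_k:k\in I\}$ with $\mathbb{R}^I$ by restricting to the coordinates in $I$, $$S(\omega)\cap L_I=S\Big(\frac{1}{\sum_{k\in\{0,\dots,d\}\setminus I}\frac{1}{\omega_k}},\ (\omega_j)_{j\in I}\Big)\subseteq\mathbb{R}^I.$$
   Context: For $\omega=(\omega_0,\dots,\omega_n)\in\mathbb{R}^{n+1}_{>0}$, $S(\omega)=\operatorname{conv}(-\omega_0\mathbb{1}_n,\omega_1e_1,\dots,\omega_ne_n)\subseteq\mathbb{R}^n$, where $\mathbb{1}_n$ is the all-ones vector and $e_k$ the standard basis vectors. In the right-hand side, the first weight plays the role of $\omega_0$ and the coordinates of $\mathbb{R}^I$ are indexed by $I$. *)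

theory Defs
  imports "HOL-Analysis.Analysis"
begin

text \<open>S restricted to the coordinate set J, realised inside real^'n as the
coordinate subspace L_J (vectors vanishing outside J):
  S_J(w0, (w_j)_{j in J}) = conv(-w0 * 1_J, w_j e_j (j in J)).\<close>
definition S_on :: "'n::finite set \<Rightarrow> real \<Rightarrow> real^'n \<Rightarrow> (real^'n) set" where
  "S_on J w0 w = convex hull
     (insert (\<chi> k. if k \<in> J then - w0 else 0) ((\<lambda>j. w $ j *\<^sub>R axis j 1) ` J))"

definition S :: "real \<Rightarrow> real^'n::finite \<Rightarrow> (real^'n) set" where
  "S w0 w = S_on UNIV w0 w"

definition L :: "'n::finite set \<Rightarrow> (real^'n) set" where
  "L I = span ((\<lambda>k. axis k 1) ` I)"

end

theory Submission
  imports Defs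
begin

lemma axis_comp: "(axis j (1::real)) $ k = (if k = j then 1 else 0)"
  by (simp add: axis_def)

lemma L_char: "L I = {x::real^'n::finite. \<forall>k. k \<notin> I \<longrightarrow> x $ k = 0}"
  unfolding L_def
proof (rule span_subspace)
  show "(\<lambda>k. axis k 1) ` I \<subseteq> {x::real^'n. \<forall>k. k \<notin> I \<longrightarrow> x $ k = 0}"
    by (auto simp: axis_def)
  show "{x::real^'n. \<forall>k. k \<notin> I \<longrightarrow> x $ k = 0} \<subseteq> span ((\<lambda>k. axis k 1) ` I)"
  proof
    fix x :: "real^'n" assume x: "x \<in> {x. \<forall>k. k \<notin> I \<longrightarrow> x $ k = 0}"
    have "x = (\<Sum>k\<in>I. x $ k *\<^sub>R axis k 1)"
    proof (subst vec_eq_iff, intro allI)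
      fix i
      have "(\<Sum>k\<in>I. x $ k *\<^sub>R axis k (1::real)) $ i = (\<Sum>k\<in>I. if k = i then x $ k else 0)"
        unfolding sum_component by (intro sum.cong) (auto simp: axis_def)
      also have "\<dots> = x $ i" using x by (simp add: sum.delta')
      finally show "x $ i = (\<Sum>k\<in>I. x $ k *\<^sub>R axis k (1::real)) $ i" by simp
    qed
    also have "\<dots> \<in> span ((\<lambda>k. axis k 1) ` I)"
      by (intro span_sum span_scale span_base) auto
    finally show "x \<in> span ((\<lambda>k. axis k 1) ` I)" .
  qed
  show "subspace {x::real^'n. \<forall>k. k \<notin> I \<longrightarrow> x $ k = 0}"
    by (auto simp: subspace_def)
qed

lemma S_on_char:
  fixes J :: "'n::finite set" and a :: real and w :: "real^'n"
  assumes a: "a > 0" and wp: "\<forall>k. w $ k > 0"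
  shows "x \<in> S_on J a w \<longleftrightarrow> (\<exists>t l. t \<ge> 0 \<and> (\<forall>j\<in>J. l j \<ge> 0) \<and> t + sum l J = 1 \<and>
            (\<forall>k. x $ k = (if k \<in> J then - t * a + l k * w $ k else 0)))"
proof -
  define p0 :: "real^'n" where "p0 = (\<chi> k. if k \<in> J then - a else 0)"
  define f :: "'n \<Rightarrow> real^'n" where "f = (\<lambda>j. w $ j *\<^sub>R axis j 1)"
  have fk: "f j $ k = (if k = j then w $ j else 0)" for j k
    by (simp add: f_def axis_def)
  have inj: "inj_on f J"
  proof (rule inj_onI)
    fix i j assume "f i = f j"
    then have "f i $ i = f j $ i" by simp
    then show "i = j" using wp by (auto simp: fk split: if_splits) (metis less_irrefl)
  qed
  have notin: "p0 \<notin> f ` J"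
  proof
    assume "p0 \<in> f ` J"
    then obtain j where j: "j \<in> J" "p0 = f j" by auto
    then have "p0 $ j = f j $ j" by simp
    then show False using j a wp by (simp add: p0_def fk) (metis less_asym neg_less_0_iff_less)
  qed
  have fin: "finite (insert p0 (f ` J))" by simp
  have S_eq: "S_on J a w = convex hull (insert p0 (f ` J))"
    by (simp add: S_on_def p0_def f_def)
  have sum_ins: "sum g (insert p0 (f ` J)) = g p0 + (\<Sum>j\<in>J. g (f j))" for g :: "real^'n \<Rightarrow> 'b::comm_monoid_add"
    using notin inj by (simp add: sum.reindex)
  have comp: "(t *\<^sub>R p0 + (\<Sum>j\<in>J. l j *\<^sub>R f j)) $ k = (if k \<in> J then - t * a + l k * w $ k else 0)" for t l k
  proof -
    have "(\<Sum>j\<in>J. l j *\<^sub>R f j) $ k = (\<Sum>j\<in>J. if j = k then l k * w $ k else 0)"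
      unfolding sum_component by (intro sum.cong) (auto simp: fk)
    also have "\<dots> = (if k \<in> J then l k * w $ k else 0)" by (simp add: sum.delta')
    finally show ?thesis by (simp add: p0_def)
  qed
  show ?thesis
  proof
    assume "x \<in> S_on J a w"
    then obtain u where u: "\<forall>y\<in>insert p0 (f ` J). 0 \<le> u y" "sum u (insert p0 (f ` J)) = 1"
      "(\<Sum>y\<in>insert p0 (f ` J). u y *\<^sub>R y) = x"
      unfolding S_eq convex_hull_finite[OF fin] by blast
    have x: "x = u p0 *\<^sub>R p0 + (\<Sum>j\<in>J. u (f j) *\<^sub>R f j)"
      using u(3) sum_ins[of "\<lambda>y. u y *\<^sub>R y"] by simp
    show "\<exists>t l. t \<ge> 0 \<and> (\<forall>j\<in>J. l j \<ge> 0) \<and> t + sum l J = 1 \<and>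
            (\<forall>k. x $ k = (if k \<in> J then - t * a + l k * w $ k else 0))"
      apply (rule exI[of _ "u p0"], rule exI[of _ "\<lambda>j. u (f j)"])
      using u(1,2) sum_ins[of u] x comp by auto
  next
    assume "\<exists>t l. t \<ge> 0 \<and> (\<forall>j\<in>J. l j \<ge> 0) \<and> t + sum l J = 1 \<and>
            (\<forall>k. x $ k = (if k \<in> J then - t * a + l k * w $ k else 0))"
    then obtain t l where tl: "t \<ge> 0" "\<forall>j\<in>J. l j \<ge> 0" "t + sum l J = 1"
      "\<forall>k. x $ k = (if k \<in> J then - t * a + l k * w $ k else 0)" by blast
    have x: "x = t *\<^sub>R p0 + (\<Sum>j\<in>J. l j *\<^sub>R f j)"
      using tl(4) comp by (simp add: vec_eq_iff)
    define u where "u y = (if y = p0 then t else l (inv_into J f y))" for y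
    have uf: "u (f j) = l j" if "j \<in> J" for j
      using that notin inj by (auto simp: u_def)
    have "u p0 = t" by (simp add: u_def)
    have 1: "\<forall>y\<in>insert p0 (f ` J). 0 \<le> u y" using tl(1,2) uf by (auto simp: u_def[of p0])
    have 2: "sum u (insert p0 (f ` J)) = 1"
      using sum_ins[of u] uf tl(3) \<open>u p0 = t\<close> by simp
    have 3: "(\<Sum>y\<in>insert p0 (f ` J). u y *\<^sub>R y) = x"
      using sum_ins[of "\<lambda>y. u y *\<^sub>R y"] uf x \<open>u p0 = t\<close> by simp
    show "x \<in> S_on J a w"
      unfolding S_eq convex_hull_finite[OF fin] using 1 2 3 by blast
  qed
qed

theorem lemma5p4:
  fixes I :: "'n::finite set" and w0 :: real and w :: "real^'n"
  assumes "I \<noteq> {}"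
    and "w0 > 0" and "\<forall>k. w $ k > 0"
  shows "S w0 w \<inter> L I = S_on I (1 / (1 / w0 + (\<Sum>k\<in>UNIV - I. 1 / w $ k))) w"
proof -
  define D where "D = 1 / w0 + (\<Sum>k\<in>UNIV - I. 1 / w $ k)"
  have Dpos: "D > 0" unfolding D_def using assms(2,3)
    by (intro add_pos_nonneg sum_nonneg) (simp_all add: less_imp_le)
  have a'pos: "1 / D > 0" using Dpos by simp
  have split: "sum g (UNIV::'n set) = sum g I + sum g (UNIV - I)" for g :: "'n \<Rightarrow> real"
    by (metis Diff_partition finite sum.union_disjoint Diff_disjoint subset_UNIV)
  have sinv: "(\<Sum>k\<in>UNIV - I. 1 / w $ k) = D - 1 / w0" by (simp add: D_def)
  show ?thesis
  proof (rule set_eqI)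
    fix x :: "real^'n"
    show "x \<in> S w0 w \<inter> L I \<longleftrightarrow> x \<in> S_on I (1 / (1 / w0 + (\<Sum>k\<in>UNIV - I. 1 / w $ k))) w"
      unfolding D_def[symmetric] S_def L_char Int_iff mem_Collect_eq
        S_on_char[OF assms(2,3)] S_on_char[OF a'pos assms(3)]
    proof
      assume "(\<exists>t l. t \<ge> 0 \<and> (\<forall>j\<in>UNIV. l j \<ge> 0) \<and> t + sum l UNIV = 1 \<and>
            (\<forall>k. x $ k = (if k \<in> UNIV then - t * w0 + l k * w $ k else 0))) \<and> (\<forall>k. k \<notin> I \<longrightarrow> x $ k = 0)"
      then obtain t l where tl: "t \<ge> 0" "\<forall>j. l j \<ge> 0" "t + sum l UNIV = 1"
        "\<forall>k. x $ k = - t * w0 + l k * w $ k" "\<forall>k. k \<notin> I \<longrightarrow> x $ k = 0" by auto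
      have lk: "l k = t * w0 * (1 / w $ k)" if "k \<notin> I" for k
      proof -
        have "0 = - t * w0 + l k * w $ k" using tl(4,5) that by metis
        then show ?thesis using assms(3) by (simp add: field_simps) (metis less_irrefl)
      qed
      have "sum l (UNIV - I) = t * w0 * (\<Sum>k\<in>UNIV - I. 1 / w $ k)"
        by (simp add: sum_distrib_left lk)
      also have "\<dots> = t * w0 * D - t" using assms(2) by (simp add: sinv field_simps)
      finally have sl: "sum l (UNIV - I) = t * w0 * D - t" .
      show "\<exists>s l. s \<ge> 0 \<and> (\<forall>j\<in>I. l j \<ge> 0) \<and> s + sum l I = 1 \<and>
            (\<forall>k. x $ k = (if k \<in> I then - s * (1 / D) + l k * w $ k else 0))"
      proof (intro exI conjI)
        show "t * w0 * D \<ge> 0" using tl(1) assms(2) Dpos by simp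
        show "\<forall>j\<in>I. l j \<ge> 0" using tl(2) by simp
        show "t * w0 * D + sum l I = 1" using tl(3) sl split[of l] by simp
        show "\<forall>k. x $ k = (if k \<in> I then - (t * w0 * D) * (1 / D) + l k * w $ k else 0)"
          using tl(4,5) Dpos by auto
      qed
    next
      assume "\<exists>s l. s \<ge> 0 \<and> (\<forall>j\<in>I. l j \<ge> 0) \<and> s + sum l I = 1 \<and>
            (\<forall>k. x $ k = (if k \<in> I then - s * (1 / D) + l k * w $ k else 0))"
      then obtain s l where sl: "s \<ge> 0" "\<forall>j\<in>I. l j \<ge> 0" "s + sum l I = 1"
        "\<forall>k. x $ k = (if k \<in> I then - s * (1 / D) + l k * w $ k else 0)" by blast
      define t where "t = s / D / w0"
      define l2 where "l2 k = (if k \<in> I then l k else s / D * (1 / w $ k))" for k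
      have "sum l2 (UNIV - I) = s / D * (\<Sum>k\<in>UNIV - I. 1 / w $ k)"
        by (simp add: sum_distrib_left l2_def)
      also have "\<dots> = s - t" using assms(2) Dpos by (simp add: sinv t_def field_simps)
      finally have s2: "sum l2 (UNIV - I) = s - t" .
      have s1: "sum l2 I = sum l I" by (simp add: l2_def)
      have "\<forall>k. x $ k = - t * w0 + l2 k * w $ k"
      proof
        fix k
        show "x $ k = - t * w0 + l2 k * w $ k"
          using sl(4) assms(2,3) by (cases "k \<in> I") (auto simp: t_def l2_def field_simps less_imp_neq[symmetric])
      qed
      moreover have "\<forall>j. l2 j \<ge> 0"
        using sl(1,2) Dpos assms(3) by (auto simp: l2_def less_imp_le)
      moreover have "t \<ge> 0" using sl(1) Dpos assms(2) by (simp add: t_def)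
      moreover have "t + sum l2 UNIV = 1" using split[of l2] s1 s2 sl(3) by simp
      moreover have "\<forall>k. k \<notin> I \<longrightarrow> x $ k = 0" using sl(4) by simp
      ultimately show "(\<exists>t l. t \<ge> 0 \<and> (\<forall>j\<in>UNIV. l j \<ge> 0) \<and> t + sum l UNIV = 1 \<and>
            (\<forall>k. x $ k = (if k \<in> UNIV then - t * w0 + l k * w $ k else 0))) \<and> (\<forall>k. k \<notin> I \<longrightarrow> x $ k = 0)"
        by auto
    qed
  qed
qed

end
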